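(* For $\theta\in[0,\pi)$ let $N_\theta$ be the image of the perimeter (boundary) of the square $[-1,1]^2$ under the anticlockwise rotation by angle $\theta$ about the origin. There exists a set $A\subset\mathbb{R}^2$ of positive Lebesgue measure such that, simultaneously for all $\theta\in[0,\pi)$, the set $A+N_\theta$ has empty interior.
   Context: $X+Y=\{x+y:x\in X,y\in Y\}$. *)

theory Defs
  imports "HOL-Analysis.Analysis"
begin

definition rot :: "real \<Rightarrow> real^2 \<Rightarrow> real^2" where
  "rot th x = vector [cos th * x$1 - sin th * x$2, sin th * x$1 + cos th * x$2]"

definition N :: "real \<Rightarrow> (real^2) set" where
  "N th = rot th ` frontier (cbox (vector [-1, -1]) (vector [1, 1]))"

definition msum :: "(real^2) set \<Rightarrow> (real^2) set \<Rightarrow> (real^2) set" where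
  "msum X Y = {x + y | x y. x \<in> X \<and> y \<in> Y}"

end

theory Submission
  imports Defs
begin

definition par :: "real \<Rightarrow> real \<Rightarrow> real \<Rightarrow> real \<Rightarrow> real \<Rightarrow> (real^2) set" where
  "par C c h T W = {p. \<bar>p$2 - h\<bar> < T \<and> \<bar>p$1 - C - c*(p$2 - h)\<bar> < W}"

lemma par_open: "open (par C c h T W)"
  unfolding par_def
  by (intro open_Collect_conj open_Collect_less continuous_intros)

lemma par_meas:
  assumes "T > 0" "W > 0"
  shows "par C c h T W \<in> lmeasurable \<and> measure lebesgue (par C c h T W) \<le> 4*T*W"
proof -
  define L :: "real^2 \<Rightarrow> real^2" where "L q = vector[q$1 + c*q$2, q$2]" for q
  have lin: "linear L"
    unfolding L_def by (intro linearI) (auto simp: vec_eq_iff forall_2 algebra_simps)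
  have mat: "matrix L = (vector[vector[1, c], vector[0,1]] :: real^2^2)"
    by (auto simp: matrix_def L_def vec_eq_iff forall_2 axis_def)
  have det: "det (matrix L) = 1"
    by (simp add: mat det_2)
  define B where "B = cbox (vector[-W,-T]) (vector[W,T] :: real^2)"
  have "0 \<in> B" using assms by (simp add: B_def mem_box_cart forall_2)
  then have ne: "B \<noteq> {}" by blast
  have mB: "measure lebesgue B = 4*T*W"
    using ne by (simp add: B_def content_cbox_cart UNIV_2)
  have LB: "L ` B \<in> lmeasurable" "measure lebesgue (L ` B) = 4*T*W"
    using measurable_linear_image[OF lin, of B] measure_linear_image[OF lin, of B] det mB
    by (auto simp: B_def)
  define v :: "real^2" where "v = vector[C, h]"
  have vLB: "(+) v ` (L ` B) \<in> lmeasurable" "measure lebesgue ((+) v ` (L ` B)) = 4*T*W"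
    using LB measurable_translation[OF LB(1), of v] measure_translation[of v "L ` B"] by auto
  have sub: "par C c h T W \<subseteq> (+) v ` (L ` B)"
  proof
    fix p assume p: "p \<in> par C c h T W"
    define q :: "real^2" where "q = vector[p$1 - C - c*(p$2 - h), p$2 - h]"
    have "q \<in> B" using p by (auto simp: q_def B_def par_def mem_box_cart forall_2)
    moreover have "p = v + L q"
      by (auto simp: q_def v_def L_def vec_eq_iff forall_2)
    ultimately show "p \<in> (+) v ` (L ` B)" by blast
  qed
  have sets: "par C c h T W \<in> sets lebesgue"
    using par_open by (simp add: borel_open)
  have "par C c h T W \<in> lmeasurable"
    using fmeasurableI2[OF vLB(1) sub] sets by blast
  moreover have "measure lebesgue (par C c h T W) \<le> 4*T*W"
    using measure_mono_fmeasurable[OF sub sets vLB(1)] vLB(2) by simp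
  ultimately show ?thesis by blast
qed
definition cs :: "nat \<Rightarrow> real \<Rightarrow> real" where
  "cs Q u = -1 + 2 * real (nat \<lfloor>(u+1) * real Q / 2\<rfloor>) / real Q"

definition cg :: "nat \<Rightarrow> nat \<Rightarrow> real" where
  "cg Q k = -1 + 2 * real k / real Q"

lemma cs_props:
  assumes "Q \<ge> 1" "-1 \<le> u" "u \<le> 1"
  shows "-1 \<le> cs Q u" "cs Q u \<le> u" "u - cs Q u < 2 / real Q"
    "nat \<lfloor>(u+1) * real Q / 2\<rfloor> \<le> Q" "cs Q u = cg Q (nat \<lfloor>(u+1) * real Q / 2\<rfloor>)"
proof -
  define x where "x = (u+1) * real Q / 2"
  have x0: "0 \<le> x" using assms by (simp add: x_def)
  have xN: "x \<le> real Q" using assms by (simp add: x_def field_simps)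
  have flr0: "0 \<le> \<lfloor>x\<rfloor>" using x0 by simp
  have flr1: "real_of_int \<lfloor>x\<rfloor> \<le> x" by simp
  have flr2: "x < real_of_int \<lfloor>x\<rfloor> + 1" by simp
  have rn: "real (nat \<lfloor>x\<rfloor>) = real_of_int \<lfloor>x\<rfloor>" using flr0 by simp
  have Np: "real Q > 0" using assms by simp
  have "cs Q u = -1 + 2 * real_of_int \<lfloor>x\<rfloor> / real Q" unfolding cs_def x_def[symmetric] rn ..
  note e = this
  show "-1 \<le> cs Q u" unfolding e using flr0 Np by simp
  have "2 * real_of_int \<lfloor>x\<rfloor> / real Q \<le> 2 * x / real Q"
    using flr1 Np by (simp add: divide_right_mono)
  also have "2 * x / real Q = u + 1" using Np by (simp add: x_def field_simps)
  finally show "cs Q u \<le> u" unfolding e by simp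
  have "u + 1 = 2 * x / real Q" using Np by (simp add: x_def field_simps)
  also have "\<dots> < 2 * (real_of_int \<lfloor>x\<rfloor> + 1) / real Q"
  proof (rule divide_strict_right_mono)
    show "2 * x < 2 * (real_of_int \<lfloor>x\<rfloor> + 1)" using mult_strict_left_mono[OF flr2, of 2] by simp
    show "0 < real Q" using Np .
  qed
  also have "2 * (real_of_int \<lfloor>x\<rfloor> + 1) / real Q = 2 * real_of_int \<lfloor>x\<rfloor> / real Q + 2 / real Q"
    by (simp add: algebra_simps add_divide_distrib)
  finally show "u - cs Q u < 2 / real Q" unfolding e by linarith
  have "\<lfloor>x\<rfloor> \<le> int Q" using xN by (simp add: floor_le_iff)
  then show "nat \<lfloor>(u+1) * real Q / 2\<rfloor> \<le> Q" unfolding x_def[symmetric] by simp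
  show "cs Q u = cg Q (nat \<lfloor>(u+1) * real Q / 2\<rfloor>)" by (simp add: cs_def cg_def)
qed

lemma abs_mult_le2: "\<bar>a::real\<bar> \<le> b \<Longrightarrow> \<bar>h\<bar> \<le> 1 \<Longrightarrow> \<bar>a * h\<bar> \<le> b"
proof -
  assume a: "\<bar>a\<bar> \<le> b" "\<bar>h\<bar> \<le> 1"
  have "\<bar>a\<bar> * \<bar>h\<bar> \<le> \<bar>a\<bar> * 1" using a by (intro mult_left_mono) auto
  then show ?thesis using a by (simp add: abs_mult)
qed

lemma abs_mult_le1: "\<bar>a::real\<bar> \<le> b \<Longrightarrow> 0 \<le> h \<Longrightarrow> h \<le> 1 \<Longrightarrow> \<bar>a * h\<bar> \<le> b"
proof -
  assume a: "\<bar>a\<bar> \<le> b" "0 \<le> h" "h \<le> 1"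
  have "\<bar>a\<bar> * h \<le> \<bar>a\<bar> * 1" using a by (intro mult_left_mono) auto
  then show ?thesis using a by (simp add: abs_mult)
qed

primrec KX :: "real \<Rightarrow> nat \<Rightarrow> nat \<Rightarrow> nat \<Rightarrow> real \<Rightarrow> real" where
  "KX m M K 0 u = m"
| "KX m M K (Suc j) u = KX m M K j (cs (K^(j+1)) u)
     + (cs (K^(j+1)) u - u) * ((2 * real j + 1) / (2 * real M))"

lemma KX_center:
  assumes "K \<ge> 1"
  shows "i \<le> M \<Longrightarrow> -1 \<le> u \<Longrightarrow> u \<le> 1 \<Longrightarrow> \<bar>KX m M K i u - m\<bar> \<le> real i * (2 / real K)"
proof (induction i arbitrary: u)
  case 0 then show ?case by simp
next
  case (Suc i)
  define c where "c = cs (K^(i+1)) u"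
  have N1: "K^(i+1) \<ge> 1" using assms by simp
  note cp = cs_props[OF N1 Suc.prems(2,3), folded c_def]
  have h0: "0 \<le> (2 * real i + 1) / (2 * real M)" by simp
  have h1: "(2 * real i + 1) / (2 * real M) \<le> 1" using Suc.prems(1) by (simp add: field_simps)
  have Kp: "real K ^ (i+1) \<ge> real K" using assms by (simp add: power_increasing[of 1 "i+1" "real K", simplified])
  have "2 / real K ^ (i+1) \<le> 2 / real K" using assms Kp by (simp add: frac_le)
  then have d: "\<bar>c - u\<bar> \<le> 2 / real K" using cp by simp
  have "\<bar>(c - u) * ((2 * real i + 1) / (2 * real M))\<bar> \<le> 2 / real K"
    using abs_mult_le1[OF d h0 h1] .
  moreover have "\<bar>KX m M K i c - m\<bar> \<le> real i * (2 / real K)"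
    using Suc.IH[of c] Suc.prems cp by simp
  moreover have eq: "KX m M K (Suc i) u - m = (KX m M K i c - m) + (c - u) * ((2 * real i + 1) / (2 * real M))"
    by (simp add: c_def)
  moreover have "real (Suc i) * (2 / real K) = real i * (2 / real K) + 2 / real K"
    by (simp add: algebra_simps add_divide_distrib)
  ultimately show ?case
    using abs_triangle_ineq[of "KX m M K i c - m" "(c - u) * ((2 * real i + 1) / (2 * real M))"] by linarith
qed


lemma KX_drift:
  assumes "K \<ge> 1"
  shows "j+1 \<le> i \<Longrightarrow> i \<le> M \<Longrightarrow> -1 \<le> u \<Longrightarrow> u \<le> 1 \<Longrightarrow>
    \<exists>v. -1 \<le> v \<and> v \<le> 1 \<and> (\<forall>y. 0 \<le> y \<and> y \<le> 1 \<longrightarrow>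
      \<bar>KX m M K i u + u * y - (KX m M K (j+1) v + v * y)\<bar> \<le> real (i - (j+1)) * (2 / real K^(j+2)))"
proof (induction i arbitrary: u)
  case 0 then show ?case by simp
next
  case (Suc i)
  show ?case
  proof (cases "Suc i = j+1")
    case True
    then show ?thesis using Suc.prems by (intro exI[of _ u]) auto
  next
    case False
    then have ji: "j+1 \<le> i" and iM: "i < M" using Suc.prems by auto
    define c where "c = cs (K^(i+1)) u"
    have N1: "K^(i+1) \<ge> 1" using assms by simp
    note cp = cs_props[OF N1 Suc.prems(3,4), folded c_def]
    obtain v where v: "-1 \<le> v" "v \<le> 1" and vb: "\<And>y. 0 \<le> y \<Longrightarrow> y \<le> 1 \<Longrightarrow>
      \<bar>KX m M K i c + c * y - (KX m M K (j+1) v + v * y)\<bar> \<le> real (i - (j+1)) * (2 / real K^(j+2))"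
    proof -
      have "c \<le> 1" using cp(2) Suc.prems(4) by linarith
      from Suc.IH[of c, OF ji less_imp_le[OF iM] cp(1) this] show ?thesis using that by blast
    qed
    define h where "h = (2 * real i + 1) / (2 * real M)"
    have h0: "0 \<le> h" by (simp add: h_def)
    have h1: "h \<le> 1" using iM by (simp add: h_def field_simps)
    have Kp: "real K ^ (j+2) \<le> real K ^ (i+1)"
      using assms ji by (intro power_increasing) auto
    have Kp0: "0 < real K ^ (j+2)" using assms by simp
    have "2 / real K ^ (i+1) \<le> 2 / real K ^ (j+2)" using Kp Kp0 by (simp add: frac_le)
    then have d: "\<bar>c - u\<bar> \<le> 2 / real K ^ (j+2)" using cp by simp
    show ?thesis
    proof (intro exI[of _ v] conjI allI impI v)
      fix y :: real assume y: "0 \<le> y \<and> y \<le> 1"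
      have eq: "KX m M K (Suc i) u + u * y - (KX m M K (j+1) v + v * y)
          = (KX m M K i c + c * y - (KX m M K (j+1) v + v * y)) + (c - u) * (h - y)"
        by (simp add: c_def h_def algebra_simps)
      have "\<bar>h - y\<bar> \<le> 1" using h0 h1 y by auto
      then have b2: "\<bar>(c - u) * (h - y)\<bar> \<le> 2 / real K ^ (j+2)" using abs_mult_le2[OF d] by blast
      have e1: "real (Suc i - (j+1)) = real (i - (j+1)) + 1" using ji by auto
      have "real (Suc i - (j+1)) * (2 / real K^(j+2)) = real (i - (j+1)) * (2 / real K^(j+2)) + 2 / real K^(j+2)"
        unfolding e1 by (simp only: distrib_right mult_1)
      then show "\<bar>KX m M K (Suc i) u + u * y - (KX m M K (j+1) v + v * y)\<bar> \<le> real (Suc i - (j+1)) * (2 / real K^(j+2))"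
        using eq b2 vb[of y] y abs_triangle_ineq[of "KX m M K i c + c * y - (KX m M K (j+1) v + v * y)" "(c - u) * (h - y)"]
        by linarith
    qed
  qed
qed


definition hh :: "nat \<Rightarrow> nat \<Rightarrow> real" where
  "hh M j = (2 * real j + 1) / (2 * real M)"

definition WW :: "nat \<Rightarrow> nat \<Rightarrow> nat \<Rightarrow> real" where
  "WW M K j = (2 / real K^(j+1)) * (1 / (2 * real M) + real M / real K)"

definition KG :: "real \<Rightarrow> nat \<Rightarrow> nat \<Rightarrow> (real^2) set" where
  "KG m M K = (\<Union>j\<in>{..<M}. \<Union>k\<in>{0..K^(j+1)}.
      par (KX m M K j (cg (K^(j+1)) k) + cg (K^(j+1)) k * hh M j) (cg (K^(j+1)) k) (hh M j)
          (1 / real M) (2 * WW M K j))"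

lemma KG_open: "open (KG m M K)"
  unfolding KG_def by (intro open_UN ballI par_open)

lemma KG_cover:
  assumes M: "M \<ge> 1" and K: "K \<ge> 1" and u: "-1 \<le> u" "u \<le> 1" and y: "0 \<le> y" "y \<le> 1"
  shows "vector[KX m M K M u + u * y, y] \<in> KG m M K"
proof -
  define f where "f = \<lfloor>y * real M\<rfloor>"
  define j where "j = min (nat f) (M - 1)"
  have jM: "j < M" using M by (simp add: j_def)
  have f0: "0 \<le> f" using y by (simp add: f_def)
  have fl1: "real_of_int f \<le> y * real M" by (simp add: f_def)
  have fl2: "y * real M < real_of_int f + 1" by (simp add: f_def)
  have hy: "\<bar>2 * y * real M - (2 * real j + 1)\<bar> \<le> 1"
  proof (cases "f \<le> int M - 1")
    case True
    then have "j = nat f" by (simp add: j_def)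
    then have "real j = real_of_int f" using f0 by simp
    then show ?thesis using fl1 fl2 by (simp add: abs_le_iff)
  next
    case False
    then have "int M \<le> f" by simp
    then have "real M \<le> y * real M" using fl1 by linarith
    then have "y \<ge> 1" using M by (simp add: field_simps)
    then have y1: "y = 1" using y by simp
    have "j = M - 1" using False by (simp add: j_def)
    then have "real j = real M - 1" using M by (simp add: of_nat_diff)
    then show ?thesis using y1 by simp
  qed
  have Mp: "0 < real M" using M by simp
  have "y - hh M j = (2 * y * real M - (2 * real j + 1)) / (2 * real M)"
    using Mp by (simp add: hh_def field_simps)
  then have hy2: "\<bar>y - hh M j\<bar> \<le> 1 / (2 * real M)"
    using hy Mp by (simp add: abs_divide divide_right_mono)
  obtain v where v: "-1 \<le> v" "v \<le> 1" and vb: "\<And>y. 0 \<le> y \<and> y \<le> 1 \<Longrightarrow>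
      \<bar>KX m M K M u + u * y - (KX m M K (j+1) v + v * y)\<bar> \<le> real (M - (j+1)) * (2 / real K^(j+2))"
    using KX_drift[OF K, of j M M u m] jM u by auto
  define Q where "Q = K^(j+1)"
  define k where "k = nat \<lfloor>(v+1) * real Q / 2\<rfloor>"
  define c where "c = cg Q k"
  have Q1: "Q \<ge> 1" using K by (simp add: Q_def)
  note cp = cs_props[OF Q1 v, folded k_def, folded c_def]
  have KXs: "KX m M K (j+1) v = KX m M K j c + (c - v) * hh M j"
    using cp(5) by (simp add: Q_def hh_def)
  define C where "C = KX m M K j c + c * hh M j"
  have e: "KX m M K M u + u * y - C - c * (y - hh M j)
      = (KX m M K M u + u * y - (KX m M K (j+1) v + v * y)) + (v - c) * (y - hh M j)"
    unfolding KXs C_def by (simp add: algebra_simps)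
  have Qp: "0 < real Q" using Q1 by simp
  have b2: "\<bar>(v - c) * (y - hh M j)\<bar> \<le> (2 / real Q) * (1 / (2 * real M))"
    unfolding abs_mult using cp(2,3,5) hy2 by (intro mult_mono) auto
  have Kp: "0 < real K" using K by simp
  have "real (M - (j+1)) * (2 / real K^(j+2)) \<le> real M * (2 / real K^(j+2))"
    by (intro mult_right_mono) auto
  also have "real M * (2 / real K^(j+2)) = (2 / real Q) * (real M / real K)"
    using Kp by (simp add: Q_def field_simps)
  finally have b1: "\<bar>KX m M K M u + u * y - (KX m M K (j+1) v + v * y)\<bar> \<le> (2 / real Q) * (real M / real K)"
    using vb[of y] y by linarith
  have WWe: "WW M K j = (2 / real Q) * (1 / (2 * real M)) + (2 / real Q) * (real M / real K)"
    by (simp add: WW_def Q_def algebra_simps)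
  have Wp: "0 < WW M K j" unfolding WWe using Mp Kp Qp by (intro add_pos_pos mult_pos_pos divide_pos_pos) auto
  have "\<bar>KX m M K M u + u * y - C - c * (y - hh M j)\<bar> \<le> WW M K j"
    unfolding e WWe using b1 b2 abs_triangle_ineq by (smt (verit))
  then have p1: "\<bar>KX m M K M u + u * y - C - c * (y - hh M j)\<bar> < 2 * WW M K j" using Wp by linarith
  have p2: "\<bar>y - hh M j\<bar> < 1 / real M" using hy2 Mp by (smt (verit, best) divide_strict_left_mono mult_pos_pos)
  have kQ: "k \<in> {0..K^(j+1)}" using cp(4) by (simp add: Q_def k_def)
  have "vector[KX m M K M u + u * y, y] \<in> par C c (hh M j) (1 / real M) (2 * WW M K j)"
    unfolding par_def using p1 p2 by simp
  then show ?thesis unfolding KG_def C_def c_def Q_def using jM kQ by blast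
qed


lemma KG_meas:
  assumes M: "M \<ge> 1" and K: "real K \<ge> 2 * real M^2"
  shows "KG m M K \<in> lmeasurable \<and> measure lebesgue (KG m M K) \<le> 32 / real M"
proof -
  have Mp: "0 < real M" using M by simp
  have "0 < real M^2" using Mp by simp
  then have Kp: "0 < real K" using K by linarith
  define P where "P j k = par (KX m M K j (cg (K^(j+1)) k) + cg (K^(j+1)) k * hh M j) (cg (K^(j+1)) k) (hh M j)
          (1 / real M) (2 * WW M K j)" for j k
  have Wp: "0 < WW M K j" for j using Mp Kp unfolding WW_def
    by (intro add_pos_pos mult_pos_pos divide_pos_pos) auto
  have Pm: "P j k \<in> lmeasurable \<and> measure lebesgue (P j k) \<le> 4 * (1 / real M) * (2 * WW M K j)" for j k
    unfolding P_def using Mp Wp[of j] by (intro par_meas) auto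
  define S where "S j = (\<Union>k\<in>{0..K^(j+1)}. P j k)" for j
  have Sm: "S j \<in> lmeasurable" for j
    unfolding S_def using Pm by (intro fmeasurable.finite_UN) auto
  have Sb: "measure lebesgue (S j) \<le> 32 / real M^2" for j
  proof -
    have "measure lebesgue (S j) \<le> (\<Sum>k\<in>{0..K^(j+1)}. measure lebesgue (P j k))"
      unfolding S_def using Pm by (intro measure_UNION_le) auto
    also have "\<dots> \<le> (\<Sum>k\<in>{0..K^(j+1)}. 4 * (1 / real M) * (2 * WW M K j))"
      using Pm by (intro sum_mono) auto
    also have "\<dots> = (real (K^(j+1)) + 1) * WW M K j * (8 / real M)"
      by (simp add: algebra_simps add_divide_distrib)
    also have "\<dots> \<le> 32 / real M^2"
    proof -
      define Q where "Q = real K ^ (j+1)"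
      have "1 \<le> real M^2" using M by simp
      then have K1: "1 \<le> real K" using K by linarith
      have Q1: "Q \<ge> 1" unfolding Q_def using K1 by (rule one_le_power)
      have a: "(Q + 1) * (2 / Q) \<le> 4" using Q1 by (simp add: field_simps)
      have b: "real M / real K \<le> 1 / (2 * real M)" using K Mp Kp
        by (simp add: field_simps power2_eq_square)
      have "(real (K^(j+1)) + 1) * WW M K j = ((Q + 1) * (2 / Q)) * (1 / (2 * real M) + real M / real K)"
        unfolding WW_def Q_def of_nat_power by (simp only: mult.assoc)
      also have "\<dots> \<le> 4 * (1 / real M)"
      proof (rule mult_mono)
        show "(Q + 1) * (2 / Q) \<le> 4" by (rule a)
        have "1 / (2 * real M) + real M / real K \<le> 1 / (2 * real M) + 1 / (2 * real M)" using b by linarith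
        also have "\<dots> = 1 / real M" by simp
        finally show "1 / (2 * real M) + real M / real K \<le> 1 / real M" .
        show "0 \<le> (4::real)" by simp
        show "0 \<le> 1 / (2 * real M) + real M / real K" using Mp Kp by simp
      qed
      finally have c: "(real (K^(j+1)) + 1) * WW M K j \<le> 4 / real M" by simp
      have "(real (K^(j+1)) + 1) * WW M K j * (8 / real M) \<le> 4 / real M * (8 / real M)"
        using c Mp by (intro mult_right_mono) auto
      also have "\<dots> = 32 / real M^2" by (simp add: power2_eq_square)
      finally show ?thesis .
    qed
    finally show ?thesis .
  qed
  have KGe: "KG m M K = (\<Union>j\<in>{..<M}. S j)" unfolding KG_def S_def P_def by simp
  have "KG m M K \<in> lmeasurable" unfolding KGe using Sm by (intro fmeasurable.finite_UN) auto
  moreover have "measure lebesgue (KG m M K) \<le> 32 / real M"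
  proof -
    have "measure lebesgue (KG m M K) \<le> (\<Sum>j\<in>{..<M}. measure lebesgue (S j))"
      unfolding KGe using Sm by (intro measure_UNION_le) auto
    also have "\<dots> \<le> (\<Sum>j\<in>{..<M}. 32 / real M^2)" using Sb by (intro sum_mono) auto
    also have "\<dots> = 32 / real M" using Mp by (simp add: power2_eq_square)
    finally show ?thesis .
  qed
  ultimately show ?thesis by blast
qed


lemma kakeya:
  fixes e r m :: real
  assumes e: "e > 0" and r: "r > 0"
  shows "\<exists>G :: (real^2) set. open G \<and> G \<in> lmeasurable \<and> measure lebesgue G \<le> e \<and>
    (\<forall>u. -1 \<le> u \<and> u \<le> 1 \<longrightarrow> (\<exists>t. \<bar>t - m\<bar> < r \<and> (\<forall>y. 0 \<le> y \<and> y \<le> 1 \<longrightarrow> vector[t + u * y, y] \<in> G)))"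
proof -
  define M where "M = nat \<lceil>32 / e\<rceil> + 1"
  have M1: "M \<ge> 1" by (simp add: M_def)
  have Mge: "real M \<ge> 32 / e" unfolding M_def by linarith
  have Mp: "0 < real M" using M1 by simp
  define K where "K = nat \<lceil>2 * real M^2 + 2 * real M / r\<rceil> + 1"
  have Kge: "real K > 2 * real M^2 + 2 * real M / r" unfolding K_def by linarith
  have "0 < 2 * real M / r" using Mp r by simp
  moreover have "0 \<le> 2 * real M^2" by simp
  ultimately have K2: "real K \<ge> 2 * real M^2" and Kr: "real K > 2 * real M / r" using Kge by linarith+
  have K1: "K \<ge> 1" by (simp add: K_def)
  have Kp: "0 < real K" using K1 by simp
  have "2 * real M < r * real K" using Kr r by (simp add: field_simps)
  then have rK: "real M * (2 / real K) < r" using Kp by (simp add: field_simps)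
  have "32 / real M \<le> e" using Mge Mp e by (simp add: field_simps)
  then have meas: "KG m M K \<in> lmeasurable \<and> measure lebesgue (KG m M K) \<le> e"
    using KG_meas[OF M1 K2, of m] by linarith
  show ?thesis
  proof (rule exI[where x="KG m M K"], intro conjI allI impI)
    show "open (KG m M K)" by (rule KG_open)
    show "KG m M K \<in> lmeasurable" "measure lebesgue (KG m M K) \<le> e" using meas by auto
    fix u :: real assume u: "-1 \<le> u \<and> u \<le> 1"
    show "\<exists>t. \<bar>t - m\<bar> < r \<and> (\<forall>y. 0 \<le> y \<and> y \<le> 1 \<longrightarrow> vector[t + u * y, y] \<in> KG m M K)"
    proof (intro exI[of _ "KX m M K M u"] conjI allI impI)
      show "\<bar>KX m M K M u - m\<bar> < r" using KX_center[OF K1, of M M u m] u rK by simp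
      fix y :: real assume "0 \<le> y \<and> y \<le> 1"
      then show "vector[KX m M K M u + u * y, y] \<in> KG m M K" using KG_cover[OF M1 K1] u by auto
    qed
  qed
qed


definition swp :: "real^2 \<Rightarrow> real^2" where
  "swp p = vector[p$2, p$1]"

lemma swp_swp [simp]: "swp (swp p) = p"
  by (simp add: swp_def vec_eq_iff forall_2)

lemma swp_linear: "linear swp"
  unfolding swp_def by (intro linearI) (auto simp: vec_eq_iff forall_2)

lemma swp_image_vimage: "swp ` G = swp -` G"
  by (auto simp: image_iff) (metis swp_swp)

lemma swp_open: "open G \<Longrightarrow> open (swp ` G)"
  unfolding swp_image_vimage
  by (intro continuous_open_vimage linear_continuous_at swp_linear[unfolded linear_conv_bounded_linear])

lemma swp_meas:
  assumes "G \<in> lmeasurable"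
  shows "swp ` G \<in> lmeasurable" "measure lebesgue (swp ` G) = measure lebesgue G"
proof -
  have mat: "matrix swp = (vector[vector[0, 1], vector[1,0]] :: real^2^2)"
    by (auto simp: matrix_def swp_def vec_eq_iff forall_2 axis_def)
  have det: "\<bar>det (matrix swp)\<bar> = 1"
    by (simp add: mat det_2)
  show "swp ` G \<in> lmeasurable" using measurable_linear_image[OF swp_linear assms] .
  show "measure lebesgue (swp ` G) = measure lebesgue G"
    using measure_linear_image[OF swp_linear assms] det by simp
qed

definition Gk :: "nat \<Rightarrow> (real^2) set" where
  "Gk i = (SOME G. open G \<and> G \<in> lmeasurable \<and> measure lebesgue G \<le> (1/2)^(i+3) \<and>
    (\<forall>u. -1 \<le> u \<and> u \<le> 1 \<longrightarrow> (\<exists>t. \<bar>t - of_rat (fst (from_nat i :: rat \<times> nat))\<bar> < 1 / real (Suc (snd (from_nat i :: rat \<times> nat))) \<and>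
       (\<forall>y. 0 \<le> y \<and> y \<le> 1 \<longrightarrow> vector[t + u * y, y] \<in> G))))"

lemma Gk_props:
  "open (Gk i) \<and> Gk i \<in> lmeasurable \<and> measure lebesgue (Gk i) \<le> (1/2)^(i+3) \<and>
    (\<forall>u. -1 \<le> u \<and> u \<le> 1 \<longrightarrow> (\<exists>t. \<bar>t - of_rat (fst (from_nat i :: rat \<times> nat))\<bar> < 1 / real (Suc (snd (from_nat i :: rat \<times> nat))) \<and>
       (\<forall>y. 0 \<le> y \<and> y \<le> 1 \<longrightarrow> vector[t + u * y, y] \<in> Gk i)))"
  unfolding Gk_def
  by (rule someI_ex, rule kakeya) auto

definition UU :: "(real^2) set" where
  "UU = (\<Union>i. Gk i \<union> swp ` Gk i)"

definition AA :: "(real^2) set" where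
  "AA = cbox (vector[0,0]) (vector[1,1]) - UU"

lemma UU_open: "open UU"
proof -
  have "open (Gk i \<union> swp ` Gk i)" for i using Gk_props[of i] by (intro open_Un swp_open) auto
  then show ?thesis unfolding UU_def by (intro open_UN) auto
qed

lemma AA_compact: "compact AA"
  unfolding AA_def by (intro compact_diff compact_cbox UU_open)

lemma AA_mem: "a \<in> AA \<Longrightarrow> 0 \<le> a$2 \<and> a$2 \<le> 1 \<and> 0 \<le> a$1 \<and> a$1 \<le> 1"
  by (auto simp: AA_def mem_box_cart forall_2)

lemma AA_line1:
  assumes u: "-1 \<le> u" "u \<le> 1" and r: "r > 0"
  shows "\<exists>t. \<bar>t - c\<bar> < r \<and> t \<notin> (\<lambda>a. a$1 - u * a$2) ` AA"
proof -
  obtain q :: rat where q: "c - r/2 < of_rat q" "of_rat q < c + r/2"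
    using of_rat_dense[of "c - r/2" "c + r/2"] r by auto
  obtain k where k: "inverse (real (Suc k)) < r/2" using reals_Archimedean[of "r/2"] r by auto
  define i where "i = to_nat (q, k)"
  have fi: "from_nat i = (q, k)" by (simp add: i_def)
  obtain t where t: "\<bar>t - of_rat q\<bar> < 1 / real (Suc k)"
    and tG: "\<And>y. 0 \<le> y \<and> y \<le> 1 \<Longrightarrow> vector[t + u * y, y] \<in> Gk i"
    using Gk_props[of i] u unfolding fi by auto
  have "\<bar>t - c\<bar> < r" using t k q by (simp add: inverse_eq_divide abs_diff_less_iff) 
  moreover have "t \<notin> (\<lambda>a. a$1 - u * a$2) ` AA"
  proof
    assume "t \<in> (\<lambda>a. a$1 - u * a$2) ` AA"
    then obtain a where a: "a \<in> AA" "t = a$1 - u * a$2" by auto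
    have "a = vector[t + u * a$2, a$2]" using a by (simp add: vec_eq_iff forall_2)
    then have "a \<in> Gk i" using tG[of "a$2"] AA_mem[OF a(1)] by simp
    then have "a \<in> UU" unfolding UU_def by blast
    then show False using a(1) by (simp add: AA_def)
  qed
  ultimately show ?thesis by blast
qed

lemma AA_line2:
  assumes u: "-1 \<le> u" "u \<le> 1" and r: "r > 0"
  shows "\<exists>t. \<bar>t - c\<bar> < r \<and> t \<notin> (\<lambda>a. a$2 - u * a$1) ` AA"
proof -
  obtain q :: rat where q: "c - r/2 < of_rat q" "of_rat q < c + r/2"
    using of_rat_dense[of "c - r/2" "c + r/2"] r by auto
  obtain k where k: "inverse (real (Suc k)) < r/2" using reals_Archimedean[of "r/2"] r by auto
  define i where "i = to_nat (q, k)"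
  have fi: "from_nat i = (q, k)" by (simp add: i_def)
  obtain t where t: "\<bar>t - of_rat q\<bar> < 1 / real (Suc k)"
    and tG: "\<And>y. 0 \<le> y \<and> y \<le> 1 \<Longrightarrow> vector[t + u * y, y] \<in> Gk i"
    using Gk_props[of i] u unfolding fi by auto
  have "\<bar>t - c\<bar> < r" using t k q by (simp add: inverse_eq_divide abs_diff_less_iff) 
  moreover have "t \<notin> (\<lambda>a. a$2 - u * a$1) ` AA"
  proof
    assume "t \<in> (\<lambda>a. a$2 - u * a$1) ` AA"
    then obtain a where a: "a \<in> AA" "t = a$2 - u * a$1" by auto
    have "swp a = vector[t + u * a$1, a$1]" using a by (simp add: swp_def vec_eq_iff forall_2)
    then have "swp a \<in> Gk i" using tG[of "a$1"] AA_mem[OF a(1)] by simp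
    then have "swp (swp a) \<in> swp ` Gk i" by blast
    then have "a \<in> UU" unfolding UU_def by auto
    then show False using a(1) by (simp add: AA_def)
  qed
  ultimately show ?thesis by blast
qed


lemma geom_sum: "(\<lambda>i. 2 * (1/2::real)^(i+3)) sums (1/2)"
proof -
  have "(\<lambda>i. (1/2::real)^i) sums (1 / (1 - 1/2))" by (rule geometric_sums) simp
  then have "(\<lambda>i. (1/4) * (1/2::real)^i) sums ((1/4) * (1 / (1 - 1/2)))" by (rule sums_mult)
  moreover have "(\<lambda>i. (1/4) * (1/2::real)^i) = (\<lambda>i. 2 * (1/2::real)^(i+3))"
    by (auto simp: power_add eval_nat_numeral)
  ultimately show ?thesis by simp
qed

lemma AA_pos: "AA \<in> sets lebesgue \<and> emeasure lebesgue AA > 0"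
proof -
  have AAs: "AA \<in> sets lebesgue" using lmeasurable_compact[OF AA_compact] by blast
  have eG: "emeasure lebesgue (Gk i \<union> swp ` Gk i) \<le> ennreal (2 * (1/2)^(i+3))" for i
  proof -
    have G: "Gk i \<in> lmeasurable" "measure lebesgue (Gk i) \<le> (1/2)^(i+3)" using Gk_props[of i] by auto
    note S = swp_meas[OF G(1)]
    have "emeasure lebesgue (Gk i \<union> swp ` Gk i) \<le> emeasure lebesgue (Gk i) + emeasure lebesgue (swp ` Gk i)"
      using G(1) S(1) by (intro emeasure_subadditive) auto
    also have "\<dots> = ennreal (measure lebesgue (Gk i)) + ennreal (measure lebesgue (Gk i))"
      using emeasure_eq_measure2[OF G(1)] emeasure_eq_measure2[OF S(1)] S(2) by simp
    also have "\<dots> = ennreal (2 * measure lebesgue (Gk i))"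
      by (simp add: ennreal_plus[symmetric] del: ennreal_plus)
    also have "\<dots> \<le> ennreal (2 * (1/2)^(i+3))" using G(2) by (intro ennreal_leI) simp
    finally show ?thesis .
  qed
  have sG: "Gk i \<union> swp ` Gk i \<in> sets lebesgue" for i
    using Gk_props[of i] swp_meas(1)[of "Gk i"] by auto
  have "emeasure lebesgue UU \<le> (\<Sum>i. emeasure lebesgue (Gk i \<union> swp ` Gk i))"
    unfolding UU_def using sG by (intro emeasure_subadditive_countably) auto
  also have "\<dots> \<le> (\<Sum>i. ennreal (2 * (1/2)^(i+3)))"
    using eG by (intro suminf_le) auto
  also have "\<dots> = ennreal (\<Sum>i. 2 * (1/2)^(i+3))"
    using geom_sum by (intro suminf_ennreal2) (auto simp: sums_iff)
  also have "\<dots> = ennreal (1/2)" by (simp only: sums_unique[OF geom_sum, symmetric])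
  finally have eU: "emeasure lebesgue UU \<le> ennreal (1/2)" .
  define Q :: "(real^2) set" where "Q = cbox (vector[0,0]) (vector[1,1])"
  have "0 \<in> Q" by (simp add: Q_def mem_box_cart forall_2)
  then have "Q \<noteq> {}" by blast
  then have mQ: "measure lebesgue Q = 1" by (simp add: Q_def content_cbox_cart UNIV_2)
  have eQ: "emeasure lebesgue Q = 1" using emeasure_eq_measure2[of Q lebesgue] mQ by (simp add: Q_def)
  have Us: "UU \<in> sets lebesgue" using UU_open by (simp add: borel_open)
  have "Q \<subseteq> AA \<union> UU" by (auto simp: Q_def AA_def)
  then have "emeasure lebesgue Q \<le> emeasure lebesgue (AA \<union> UU)"
    using AAs Us by (intro emeasure_mono) auto
  also have "\<dots> \<le> emeasure lebesgue AA + emeasure lebesgue UU"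
    using AAs Us by (intro emeasure_subadditive)
  also have "\<dots> \<le> emeasure lebesgue AA + ennreal (1/2)" using eU by (intro add_left_mono)
  finally have *: "1 \<le> emeasure lebesgue AA + ennreal (1/2)" using eQ by simp
  have "emeasure lebesgue AA \<noteq> 0"
  proof
    assume "emeasure lebesgue AA = 0"
    then have le: "ennreal 1 \<le> ennreal (1/2)" using * by simp
    have "0 \<le> (1/2::real)" by simp
    from ennreal_le_iff[OF this, of 1] le have "(1::real) \<le> 1/2" by (simp only:)
    then show False by simp
  qed
  then show ?thesis using AAs by (simp add: zero_less_iff_neq_zero)
qed


lemma proj_dense:
  fixes cs sn :: real
  assumes one: "cs^2 + sn^2 = 1" and r: "r > 0"
  shows "\<exists>s. \<bar>s - c\<bar> < r \<and> s \<notin> (\<lambda>a. a$1 * cs + a$2 * sn) ` AA"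
proof (cases "\<bar>sn\<bar> \<le> \<bar>cs\<bar>")
  case True
  have cs0: "cs \<noteq> 0"
  proof
    assume "cs = 0" then have "sn = 0" using True by simp
    then show False using one \<open>cs = 0\<close> by simp
  qed
  define u where "u = - sn / cs"
  have "\<bar>u\<bar> \<le> 1" using True cs0 by (simp add: u_def abs_divide divide_le_eq_1)
  then have u: "-1 \<le> u" "u \<le> 1" by auto
  have rc: "r / \<bar>cs\<bar> > 0" using r cs0 by simp
  obtain t where t: "\<bar>t - c / cs\<bar> < r / \<bar>cs\<bar>" and tn: "t \<notin> (\<lambda>a. a$1 - u * a$2) ` AA"
    using AA_line1[OF u rc, of "c / cs"] by blast
  have "\<bar>cs * t - c\<bar> = \<bar>cs\<bar> * \<bar>t - c / cs\<bar>"
    using cs0 by (simp add: abs_mult[symmetric] algebra_simps)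
  also have "\<dots> < \<bar>cs\<bar> * (r / \<bar>cs\<bar>)" using t cs0 by (intro mult_strict_left_mono) auto
  also have "\<dots> = r" using cs0 by simp
  finally have d: "\<bar>cs * t - c\<bar> < r" .
  have "cs * t \<notin> (\<lambda>a. a$1 * cs + a$2 * sn) ` AA"
  proof
    assume "cs * t \<in> (\<lambda>a. a$1 * cs + a$2 * sn) ` AA"
    then obtain a where a: "a \<in> AA" "cs * t = a$1 * cs + a$2 * sn" by auto
    have "a$1 - u * a$2 = (a$1 * cs + a$2 * sn) / cs" using cs0 by (simp add: u_def field_simps)
    also have "\<dots> = (cs * t) / cs" using a(2) by simp
    also have "\<dots> = t" using cs0 by simp
    finally show False using tn a(1) by auto
  qed
  then show ?thesis using d by blast
next
  case False
  then have sn0: "sn \<noteq> 0" by auto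
  define u where "u = - cs / sn"
  have "\<bar>u\<bar> \<le> 1" using False sn0 by (simp add: u_def abs_divide divide_le_eq_1)
  then have u: "-1 \<le> u" "u \<le> 1" by auto
  have rc: "r / \<bar>sn\<bar> > 0" using r sn0 by simp
  obtain t where t: "\<bar>t - c / sn\<bar> < r / \<bar>sn\<bar>" and tn: "t \<notin> (\<lambda>a. a$2 - u * a$1) ` AA"
    using AA_line2[OF u rc, of "c / sn"] by blast
  have "\<bar>sn * t - c\<bar> = \<bar>sn\<bar> * \<bar>t - c / sn\<bar>"
    using sn0 by (simp add: abs_mult[symmetric] algebra_simps)
  also have "\<dots> < \<bar>sn\<bar> * (r / \<bar>sn\<bar>)" using t sn0 by (intro mult_strict_left_mono) auto
  also have "\<dots> = r" using sn0 by simp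
  finally have d: "\<bar>sn * t - c\<bar> < r" .
  have "sn * t \<notin> (\<lambda>a. a$1 * cs + a$2 * sn) ` AA"
  proof
    assume "sn * t \<in> (\<lambda>a. a$1 * cs + a$2 * sn) ` AA"
    then obtain a where a: "a \<in> AA" "sn * t = a$1 * cs + a$2 * sn" by auto
    have "a$2 - u * a$1 = (a$1 * cs + a$2 * sn) / sn" using sn0 by (simp add: u_def field_simps)
    also have "\<dots> = (sn * t) / sn" using a(2) by simp
    also have "\<dots> = t" using sn0 by simp
    finally show False using tn a(1) by auto
  qed
  then show ?thesis using d by blast
qed

lemma two_sided:
  fixes F :: "real set"
  assumes cl: "closed F" and dn: "\<And>c r. r > 0 \<Longrightarrow> \<exists>s. \<bar>s - c\<bar> < r \<and> s \<notin> F" and r: "r > 0"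
  shows "\<exists>s. \<bar>s - c\<bar> < r \<and> s - 1 \<notin> F \<and> s + 1 \<notin> F"
proof -
  obtain s1 where s1: "\<bar>s1 - (c - 1)\<bar> < r" "s1 \<notin> F" using dn[OF r] by blast
  have "open (- F)" using cl by (simp add: closed_def)
  then obtain d where d: "d > 0" "\<And>x'. \<bar>x' - s1\<bar> < d \<Longrightarrow> x' \<in> - F"
    using s1(2) unfolding open_real by blast
  define d' where "d' = min d (r - \<bar>s1 - (c - 1)\<bar>)"
  have d'p: "d' > 0" using d s1 by (simp add: d'_def)
  obtain s2 where s2: "\<bar>s2 - (s1 + 2)\<bar> < d'" "s2 \<notin> F" using dn[OF d'p] by blast
  show ?thesis
  proof (intro exI[of _ "s2 - 1"] conjI)
    have "\<bar>s2 - (s1 + 2)\<bar> < r - \<bar>s1 - (c - 1)\<bar>" using s2(1) by (simp add: d'_def)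
    then show "\<bar>s2 - 1 - c\<bar> < r" by arith
    have "\<bar>s2 - (s1 + 2)\<bar> < d" using s2(1) by (simp add: d'_def)
    then have "\<bar>s2 - 1 - 1 - s1\<bar> < d" by arith
    then show "s2 - 1 - 1 \<notin> F" using d(2) by blast
    show "s2 - 1 + 1 \<notin> F" using s2(2) by simp
  qed
qed


lemma rot_id:
  fixes cs sn s t :: real
  assumes "cs^2 + sn^2 = 1"
  shows "(s * cs - t * sn) * cs + (s * sn + t * cs) * sn = s" "(s * cs - t * sn) * (-sn) + (s * sn + t * cs) * cs = t"
proof -
  have "(s * cs - t * sn) * cs + (s * sn + t * cs) * sn = s * (cs^2 + sn^2)" by (simp add: algebra_simps power2_eq_square)
  then show "(s * cs - t * sn) * cs + (s * sn + t * cs) * sn = s" using assms by simp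
  have "(s * cs - t * sn) * (-sn) + (s * sn + t * cs) * cs = t * (cs^2 + sn^2)" by (simp add: algebra_simps power2_eq_square)
  then show "(s * cs - t * sn) * (-sn) + (s * sn + t * cs) * cs = t" using assms by simp
qed

lemma frontier_sq:
  assumes "z \<in> frontier (cbox (vector [-1, -1]) (vector [1, 1]) :: (real^2) set)"
  shows "z$1 = 1 \<or> z$1 = -1 \<or> z$2 = 1 \<or> z$2 = -1"
  using assms unfolding frontier_cbox by (auto simp: mem_box_cart forall_2)

lemma no_interior:
  "interior (msum AA (N th)) = {}"
proof (rule ccontr)
  assume "interior (msum AA (N th)) \<noteq> {}"
  then obtain p0 where "p0 \<in> interior (msum AA (N th))" by blast
  then obtain e where e: "e > 0" "ball p0 e \<subseteq> msum AA (N th)" unfolding mem_interior by blast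
  define cs where "cs = cos th"
  define sn where "sn = sin th"
  have one: "cs^2 + sn^2 = 1" by (simp add: cs_def sn_def add.commute)
  have one': "(-sn)^2 + cs^2 = 1" using one by (simp add: add.commute)
  define pn where "pn a = a$1 * cs + a$2 * sn" for a :: "real^2"
  define pm where "pm a = a$1 * (-sn) + a$2 * cs" for a :: "real^2"
  have cln: "closed (pn ` AA)" unfolding pn_def
    by (intro compact_imp_closed compact_continuous_image AA_compact continuous_intros)
  have clm: "closed (pm ` AA)" unfolding pm_def
    by (intro compact_imp_closed compact_continuous_image AA_compact continuous_intros)
  have e4: "e/4 > 0" using e by simp
  obtain s where s: "\<bar>s - pn p0\<bar> < e/4" "s - 1 \<notin> pn ` AA" "s + 1 \<notin> pn ` AA"
    using two_sided[OF cln _ e4, of "pn p0"] proj_dense[OF one] unfolding pn_def by blast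
  obtain t where t: "\<bar>t - pm p0\<bar> < e/4" "t - 1 \<notin> pm ` AA" "t + 1 \<notin> pm ` AA"
    using two_sided[OF clm _ e4, of "pm p0"] proj_dense[OF one'] unfolding pm_def by blast
  define p :: "real^2" where "p = vector[s * cs - t * sn, s * sn + t * cs]"
  have pnp: "pn p = s" and pmp: "pm p = t" using rot_id[OF one, of s t] by (simp_all add: p_def pn_def pm_def algebra_simps)
  have p01: "p0$1 = pn p0 * cs - pm p0 * sn" and p02: "p0$2 = pn p0 * sn + pm p0 * cs"
  proof -
    have "pn p0 * cs - pm p0 * sn = p0$1 * (cs^2 + sn^2)" by (simp add: pn_def pm_def algebra_simps power2_eq_square)
    then show "p0$1 = pn p0 * cs - pm p0 * sn" using one by simp
    have "pn p0 * sn + pm p0 * cs = p0$2 * (cs^2 + sn^2)" by (simp add: pn_def pm_def algebra_simps power2_eq_square)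
    then show "p0$2 = pn p0 * sn + pm p0 * cs" using one by simp
  qed
  have csb: "\<bar>cs\<bar> \<le> 1" and snb: "\<bar>sn\<bar> \<le> 1" by (simp_all add: cs_def sn_def)
  have d1: "\<bar>(p0 - p)$1\<bar> < e/2"
  proof -
    have "(p0 - p)$1 = (pn p0 - s) * cs - (pm p0 - t) * sn" using p01 by (simp add: p_def algebra_simps)
    moreover have "\<bar>(pn p0 - s) * cs\<bar> < e/4"
    proof -
      have "\<bar>(pn p0 - s) * cs\<bar> \<le> \<bar>pn p0 - s\<bar>" by (rule abs_mult_le2[OF order_refl csb])
      then show ?thesis using s(1) abs_minus_commute[of "s" "pn p0"] by linarith
    qed
    moreover have "\<bar>(pm p0 - t) * sn\<bar> < e/4"
    proof -
      have "\<bar>(pm p0 - t) * sn\<bar> \<le> \<bar>pm p0 - t\<bar>" by (rule abs_mult_le2[OF order_refl snb])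
      then show ?thesis using t(1) abs_minus_commute[of "t" "pm p0"] by linarith
    qed
    ultimately show ?thesis using e by arith
  qed
  have d2: "\<bar>(p0 - p)$2\<bar> < e/2"
  proof -
    have "(p0 - p)$2 = (pn p0 - s) * sn + (pm p0 - t) * cs" using p02 by (simp add: p_def algebra_simps)
    moreover have "\<bar>(pn p0 - s) * sn\<bar> < e/4"
    proof -
      have "\<bar>(pn p0 - s) * sn\<bar> \<le> \<bar>pn p0 - s\<bar>" by (rule abs_mult_le2[OF order_refl snb])
      then show ?thesis using s(1) abs_minus_commute[of "s" "pn p0"] by linarith
    qed
    moreover have "\<bar>(pm p0 - t) * cs\<bar> < e/4"
    proof -
      have "\<bar>(pm p0 - t) * cs\<bar> \<le> \<bar>pm p0 - t\<bar>" by (rule abs_mult_le2[OF order_refl csb])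
      then show ?thesis using t(1) abs_minus_commute[of "t" "pm p0"] by linarith
    qed
    ultimately show ?thesis using e by arith
  qed
  have "dist p0 p < e"
    using norm_le_l1_cart[of "p0 - p"] d1 d2 by (simp add: dist_norm sum_2)
  then have "p \<in> msum AA (N th)" using e(2) by auto
  then obtain a y where a: "a \<in> AA" and y: "y \<in> N th" and pay: "p = a + y" by (auto simp: msum_def)
  obtain z where z: "z \<in> frontier (cbox (vector [-1, -1]) (vector [1, 1]))" and yz: "y = rot th z"
    using y unfolding N_def by blast
  have pny: "pn y = z$1" and pmy: "pm y = z$2"
    using rot_id[OF one, of "z$1" "z$2"] by (simp_all add: yz rot_def pn_def pm_def cs_def sn_def algebra_simps)
  have "s = pn a + z$1" using pnp pny pay by (simp add: pn_def algebra_simps)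
  moreover have "t = pm a + z$2" using pmp pmy pay by (simp add: pm_def algebra_simps)
  moreover have "pn a \<in> pn ` AA" "pm a \<in> pm ` AA" using a by auto
  ultimately show False using frontier_sq[OF z] s t by auto
qed

theorem mainTheorem12:
  shows "\<exists>A :: (real^2) set. A \<in> sets lebesgue \<and> emeasure lebesgue A > 0 \<and>
           (\<forall>th \<in> {0..<pi}. interior (msum A (N th)) = {})"
  using AA_pos no_interior by blast

end
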